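(* Let $\beta>2$, $r_{\mathrm e}\ge0$, $\theta_{\mathrm e}\in[0,2\pi)$, and let $F_\beta(\mathbf{x},r)$, $p_\beta,q_\beta$, $\mathbf{m}_i^\beta$, $\boldsymbol{\sigma}_i^\beta$ be as in the context. Let $\epsilon>0$ and let $\mathbf{m}_i^\beta(\cdot),\boldsymbol{\sigma}_i^\beta(\cdot):[0,\epsilon)\to\mathbb{R}^2$, $0\le i\le 2$, be smooth maps with $\mathbf{m}_i^\beta(0)=\mathbf{m}_i^\beta$, $\boldsymbol{\sigma}_i^\beta(0)=\boldsymbol{\sigma}_i^\beta$, such that $\mathbf{m}_i^\beta(r)$ and $\boldsymbol{\sigma}_i^\beta(r)$ are critical points of $F_\beta(\cdot,r)$ for every $r\in[0,\epsilon)$ (such maps exist by the implicit function theorem). Let $\phi_i^\beta(r)=F_\beta(\mathbf{m}_i^\beta(r),r)$ and $\psi_i^\beta(r)=F_\beta(\boldsymbol{\sigma}_i^\beta(r),r)$. Then for $0\le i\le2$, $$\frac{d\phi_i^\beta}{dr}(0)=(3p_\beta-1)\cos\Big(\theta_{\mathrm e}-\frac{2\pi i}{3}\Big),\qquad \frac{d\psi_i^\beta}{dr}(0)=(3q_\beta-1)\cos\Big(\theta_{\mathrm e}-\frac{2\pi i}{3}\Big).$$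
   Context: $\Xi=\{(x_1,x_2): x_1,x_2\ge0,\ x_1+x_2\le1\}$, $x_0=1-x_1-x_2$, $\mathbf{v}_k=(\cos(2\pi k/3),\sin(2\pi k/3))$, and $$F_\beta(\mathbf{x},r)=-\frac12\Big|\sum_{k=0}^2x_k\mathbf{v}_k\Big|^2+\frac1\beta\sum_{k=0}^2x_k\log(3x_k)-r\sum_{i=0}^2x_i\cos\Big(\theta_{\mathrm e}-\frac{2\pi i}{3}\Big),$$ the potential of the mean-field Potts model with external field of magnitude $r$ and angle $\theta_{\mathrm e}$. Let $f_0(t)=\frac{2}{3(1-3t)}\log\frac{1-2t}{t}$ on $(0,1/2)\setminus\{1/3\}$, $f_0(1/3)=2$; for $\beta>2$ the equation $f_0(t)=\beta$ has exactly two solutions $p_\beta<q_\beta$ in $(0,1/2)$, with $p_\beta<1/3<q_\beta$. Set $\mathbf{m}_0^\beta=(p_\beta,p_\beta)$, $\mathbf{m}_1^\beta=(1-2p_\beta,p_\beta)$, $\mathbf{m}_2^\beta=(p_\beta,1-2p_\beta)$, $\boldsymbol{\sigma}_0^\beta=(q_\beta,q_\beta)$, $\boldsymbol{\sigma}_1^\beta=(1-2q_\beta,q_\beta)$, $\boldsymbol{\sigma}_2^\beta=(q_\beta,1-2q_\beta)$; these are nondegenerate critical points of $F_\beta(\cdot,0)$. *)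

theory Defs
  imports "HOL-Analysis.Analysis"
begin

text \<open>Barycentric coordinates: x = (x1,x2), x0 = 1 - x1 - x2.\<close>
definition xcoord :: "real \<times> real \<Rightarrow> nat \<Rightarrow> real" where
  "xcoord x k = (if k = 0 then 1 - fst x - snd x else if k = 1 then fst x else snd x)"

definition F_potts :: "real \<Rightarrow> real \<Rightarrow> real \<times> real \<Rightarrow> real \<Rightarrow> real" where
  "F_potts \<beta> \<theta> x r =
     - (1/2) * ((\<Sum>k\<le>2. xcoord x k * cos (2*pi*real k/3))\<^sup>2
               + (\<Sum>k\<le>2. xcoord x k * sin (2*pi*real k/3))\<^sup>2)
     + (1/\<beta>) * (\<Sum>k\<le>2. xcoord x k * ln (3 * xcoord x k))
     - r * (\<Sum>i\<le>2. xcoord x i * cos (\<theta> - 2*pi*real i/3))"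

definition f0 :: "real \<Rightarrow> real" where
  "f0 t = (if t = 1/3 then 2 else 2 / (3 * (1 - 3*t)) * ln ((1 - 2*t) / t))"

definition simplex_interior :: "(real \<times> real) set" where
  "simplex_interior = {x. 0 < fst x \<and> 0 < snd x \<and> fst x + snd x < 1}"

definition critical_point :: "real \<Rightarrow> real \<Rightarrow> real \<Rightarrow> real \<times> real \<Rightarrow> bool" where
  "critical_point \<beta> \<theta> r x \<longleftrightarrow> x \<in> simplex_interior \<and>
     ((\<lambda>y. F_potts \<beta> \<theta> y r) has_derivative (\<lambda>h. 0)) (at x)"

definition smooth_on :: "real set \<Rightarrow> (real \<Rightarrow> real \<times> real) \<Rightarrow> bool" where
  "smooth_on S f \<longleftrightarrow> (\<exists>D :: nat \<Rightarrow> real \<Rightarrow> real \<times> real. D 0 = f \<and>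
     (\<forall>k. \<forall>t\<in>S. (D k has_vector_derivative D (Suc k) t) (at t within S)))"

definition m_pt :: "real \<Rightarrow> nat \<Rightarrow> real \<times> real" where
  "m_pt p i = (if i = 0 then (p, p) else if i = 1 then (1 - 2*p, p) else (p, 1 - 2*p))"

end

theory Submission
  imports Defs
begin



lemma trig4: "cos (\<theta> - 2*pi*2/3) = - cos \<theta> / 2 - sqrt 3 / 2 * sin \<theta>"
proof -
  have e: "2*pi*2/3 = pi/3 + pi" by simp
  have c: "cos (2*pi*2/3) = -1/2" using cos_add[of "pi/3" pi] by (simp add: cos_60)
  have s: "sin (2*pi*2/3) = -sqrt 3/2" using sin_add[of "pi/3" pi] by (simp add: sin_60)
  show ?thesis by (simp only: cos_diff c s) (simp add: algebra_simps)
qed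

lemma trig2: "cos (\<theta> - 2*pi/3) = - cos \<theta> / 2 + sqrt 3 / 2 * sin \<theta>"
  by (simp add: cos_diff cos_120 sin_120)

lemma lin1: "p * c + (1 - 2 * p) * (a / 2 - c / 2) + p * (- (c / 2) - a / 2) = (1 - 3 * p) * (a / 2 - c / 2::real)"
  by (simp add: field_simps)

lemma lin2: "p * c + p * (a / 2 - c / 2) + (1 - 2 * p) * (- (c / 2) - a / 2) = (1 - 3 * p) * (- (c / 2) - a / 2::real)"
  by (simp add: field_simps)

definition Lf :: "real \<Rightarrow> real \<times> real \<Rightarrow> real" where
  "Lf \<theta> y = (\<Sum>i\<le>2. xcoord y i * cos (\<theta> - 2*pi*real i/3))"

lemma Lf_expand: "Lf \<theta> y = (1 - fst y - snd y) * cos \<theta> + fst y * cos (\<theta> - 2*pi/3) + snd y * cos (\<theta> - 2*pi*2/3)"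
  by (simp add: Lf_def xcoord_def numeral_2_eq_2 atMost_Suc)

lemma F_split: "F_potts \<beta> \<theta> y r = F_potts \<beta> \<theta> y 0 - r * Lf \<theta> y"
  by (simp add: F_potts_def Lf_def)

lemma Lf_m: assumes "i \<le> 2" shows "Lf \<theta> (m_pt p i) = (1 - 3*p) * cos (\<theta> - 2*pi*real i/3)"
proof -
  have "i = 0 \<or> i = 1 \<or> i = 2" using assms by auto
  moreover have "Lf \<theta> (m_pt p 0) = (1 - 3*p) * cos (\<theta> - 2*pi*real 0/3)"
    unfolding Lf_expand trig2 trig4 by (simp add: m_pt_def algebra_simps)
  moreover have "Lf \<theta> (m_pt p 1) = (1 - 3*p) * cos (\<theta> - 2*pi/3)"
    unfolding Lf_expand trig2 trig4 m_pt_def using lin1[of p "cos \<theta>" "sqrt 3 * sin \<theta>"] by simp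
  moreover have "Lf \<theta> (m_pt p 2) = (1 - 3*p) * cos (\<theta> - 2*pi*2/3)"
    unfolding Lf_expand trig2 trig4 m_pt_def using lin2[of p "cos \<theta>" "sqrt 3 * sin \<theta>"] by simp
  ultimately show ?thesis by auto
qed

lemma key:
  assumes "smooth_on {0..<\<epsilon>} g" "\<epsilon> > 0" "critical_point \<beta> \<theta> 0 (g 0)"
  shows "((\<lambda>r. F_potts \<beta> \<theta> (g r) r) has_real_derivative - Lf \<theta> (g 0)) (at 0 within {0..<\<epsilon>})"
proof -
  let ?S = "{0..<\<epsilon>::real}"
  obtain D where D0: "D 0 = g" and DD: "\<And>k t. t \<in> ?S \<Longrightarrow> (D k has_vector_derivative D (Suc k) t) (at t within ?S)"
    using assms(1) unfolding smooth_on_def by blast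
  have gd: "(g has_vector_derivative D 1 0) (at 0 within ?S)"
    using DD[of 0 0] D0 assms(2) by simp
  hence gd': "(g has_derivative (\<lambda>h. h *\<^sub>R D 1 0)) (at 0 within ?S)"
    by (simp add: has_vector_derivative_def)
  have G: "((\<lambda>y. F_potts \<beta> \<theta> y 0) has_derivative (\<lambda>h. 0)) (at (g 0))"
    using assms(3) unfolding critical_point_def by blast
  have c1: "((\<lambda>r. F_potts \<beta> \<theta> (g r) 0) has_derivative (\<lambda>h. 0)) (at 0 within ?S)"
    using diff_chain_within[OF gd' has_derivative_at_withinI[OF G]] by (simp add: o_def)
  have c1': "((\<lambda>r. F_potts \<beta> \<theta> (g r) 0) has_real_derivative 0) (at 0 within ?S)"
    unfolding has_field_derivative_def using c1 by (rule has_derivative_eq_rhs) auto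
  have L: "((\<lambda>r. Lf \<theta> (g r)) has_derivative
     (\<lambda>h. (- fst (h *\<^sub>R D 1 0) - snd (h *\<^sub>R D 1 0)) * cos \<theta> + fst (h *\<^sub>R D 1 0) * cos (\<theta> - 2*pi/3) + snd (h *\<^sub>R D 1 0) * cos (\<theta> - 2*pi*2/3))) (at 0 within ?S)"
    unfolding Lf_expand
    by (rule derivative_eq_intros has_derivative_fst[OF gd'] has_derivative_snd[OF gd'] refl | simp)+
  have L': "((\<lambda>r. Lf \<theta> (g r)) has_real_derivative (fst (D 1 0) * (cos (\<theta> - 2*pi/3) - cos \<theta>) + snd (D 1 0) * (cos (\<theta> - 2*pi*2/3) - cos \<theta>))) (at 0 within ?S)"
    unfolding has_field_derivative_def using L by (rule has_derivative_eq_rhs) (auto simp: algebra_simps fun_eq_iff)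
  from DERIV_diff[OF c1' DERIV_mult[OF DERIV_ident L']] show ?thesis by (subst F_split) simp
qed


theorem lemma5p1:
  fixes \<beta> \<theta> p q \<epsilon> :: real
    and m \<sigma> :: "nat \<Rightarrow> real \<Rightarrow> real \<times> real"
  assumes "\<beta> > 2"
    and "0 \<le> \<theta>" "\<theta> < 2 * pi"
    and "0 < p" "p < q" "q < 1/2" "f0 p = \<beta>" "f0 q = \<beta>"
    and "\<epsilon> > 0"
    and "\<And>i. i \<le> 2 \<Longrightarrow> smooth_on {0..<\<epsilon>} (m i)"
    and "\<And>i. i \<le> 2 \<Longrightarrow> smooth_on {0..<\<epsilon>} (\<sigma> i)"
    and "\<And>i. i \<le> 2 \<Longrightarrow> m i 0 = m_pt p i"
    and "\<And>i. i \<le> 2 \<Longrightarrow> \<sigma> i 0 = m_pt q i"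
    and "\<And>i r. i \<le> 2 \<Longrightarrow> r \<in> {0..<\<epsilon>} \<Longrightarrow> critical_point \<beta> \<theta> r (m i r)"
    and "\<And>i r. i \<le> 2 \<Longrightarrow> r \<in> {0..<\<epsilon>} \<Longrightarrow> critical_point \<beta> \<theta> r (\<sigma> i r)"
    and "i \<le> 2"
  shows "((\<lambda>r. F_potts \<beta> \<theta> (m i r) r) has_real_derivative
            (3*p - 1) * cos (\<theta> - 2*pi*real i/3)) (at 0 within {0..<\<epsilon>}) \<and>
         ((\<lambda>r. F_potts \<beta> \<theta> (\<sigma> i r) r) has_real_derivative
            (3*q - 1) * cos (\<theta> - 2*pi*real i/3)) (at 0 within {0..<\<epsilon>})"
  proof -
  have c0m: "critical_point \<beta> \<theta> 0 (m i 0)" and c0s: "critical_point \<beta> \<theta> 0 (\<sigma> i 0)"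
    using assms(14,15)[OF assms(16)] assms(9) by auto
  have A: "((\<lambda>r. F_potts \<beta> \<theta> (m i r) r) has_real_derivative - Lf \<theta> (m i 0)) (at 0 within {0..<\<epsilon>})"
    by (rule key[OF assms(10)[OF assms(16)] assms(9) c0m])
  have B: "((\<lambda>r. F_potts \<beta> \<theta> (\<sigma> i r) r) has_real_derivative - Lf \<theta> (\<sigma> i 0)) (at 0 within {0..<\<epsilon>})"
    by (rule key[OF assms(11)[OF assms(16)] assms(9) c0s])
  have "- Lf \<theta> (m i 0) = (3*p - 1) * cos (\<theta> - 2*pi*real i/3)"
    using assms(12)[OF assms(16)] Lf_m[OF assms(16)] by (simp add: algebra_simps)
  moreover have "- Lf \<theta> (\<sigma> i 0) = (3*q - 1) * cos (\<theta> - 2*pi*real i/3)"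
    using assms(13)[OF assms(16)] Lf_m[OF assms(16)] by (simp add: algebra_simps)
  ultimately show ?thesis using A B by simp
qed

end
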